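(* Let $0<q<1$ and $\nu\in\mathbb{C}$ with $q^\nu\notin q^{\mathbb{Z}}$. For $w\in\mathbb{C}\setminus\{0\}$ (complex powers of $w$ taken with one fixed branch of $\log w$) one has \[ \mathfrak{j}_\nu(2w;q)\,\mathfrak{j}_{-\nu-1}(2w;q)+\mathfrak{j}_{\nu+1}(2w;q)\,\mathfrak{j}_{-\nu}(2w;q) =\frac{q^{\nu(\nu+1)/2}(q^{\nu+1};q)_\infty(q^{-\nu};q)_\infty(-q^{1/2}w^2;q)_\infty}{(q;q)_\infty^{\,2}\,w}, \] and, equivalently, for $z\in\mathbb{C}$, \begin{align*} &{}_0\phi_1(;q^{\nu+1};q,-q^{\nu+1}z)\,{}_0\phi_1(;q^{-\nu};q,-q^{-\nu}z)\\ &-\frac{q^\nu z}{(1-q^\nu)(1-q^{\nu+1})}\,{}_0\phi_1(;q^{\nu+2};q,-q^{\nu+2}z)\,{}_0\phi_1(;q^{-\nu+1};q,-q^{-\nu+1}z)=(-z;q)_\infty. \end{align*}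
   Context: Complex powers of $q$ are $q^s=e^{s\log q}$. $(a;q)_k=\prod_{j=0}^{k-1}(1-aq^j)$, $(a;q)_\infty=\lim_k(a;q)_k$, ${}_0\phi_1(;b;q,z)=\sum_{k\ge0}\frac{q^{k(k-1)}}{(q;q)_k(b;q)_k}z^k$, and \[ \mathfrak{j}_\nu(x;q)=q^{\nu(\nu+1)/4}\frac{(q^{\nu+1};q)_\infty}{(q;q)_\infty}\left(\frac{x}{2}\right)^{\nu}{}_0\phi_1\!\left(;q^{\nu+1};q,-q^{\nu+3/2}\frac{x^2}{4}\right). \] *)

theory Defs
  imports "HOL-Analysis.Analysis"
begin

definition qpow :: "real \<Rightarrow> complex \<Rightarrow> complex" where
  "qpow q s = exp (s * complex_of_real (ln q))"

definition qpoch :: "complex \<Rightarrow> real \<Rightarrow> nat \<Rightarrow> complex" where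
  "qpoch a q k = (\<Prod>j<k. 1 - a * complex_of_real q ^ j)"

definition qpoch_inf :: "complex \<Rightarrow> real \<Rightarrow> complex" where
  "qpoch_inf a q = lim (\<lambda>k. qpoch a q k)"

definition phi01 :: "real \<Rightarrow> complex \<Rightarrow> complex \<Rightarrow> complex" where
  "phi01 q b z = (\<Sum>k. complex_of_real (q ^ (k * (k - 1)))
        / (qpoch (complex_of_real q) q k * qpoch b q k) * z ^ k)"

text \<open>The q-Bessel function j_nu(x;q); the parameter L is the chosen
  branch of log(x/2), so that (x/2)^nu = exp(nu L).\<close>
definition qjfrak :: "real \<Rightarrow> complex \<Rightarrow> complex \<Rightarrow> complex \<Rightarrow> complex" where
  "qjfrak q \<nu> L x =
     qpow q (\<nu> * (\<nu> + 1) / 4) * qpoch_inf (qpow q (\<nu> + 1)) q / qpoch_inf (complex_of_real q) q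
     * exp (\<nu> * L)
     * phi01 q (qpow q (\<nu> + 1)) (- qpow q (\<nu> + 3/2) * x ^ 2 / 4)"

end

theory Submission
  imports Defs
begin


lemma qpow_add: "qpow q (s+t) = qpow q s * qpow q t"
  by (simp add: qpow_def distrib_right exp_add)

lemma qpow_nat: "0 < q \<Longrightarrow> qpow q (of_nat n) = complex_of_real q ^ n"
proof -
  assume "0 < q"
  have "qpow q (of_nat n) = exp (complex_of_real (ln q)) ^ n"
    unfolding qpow_def by (rule exp_of_nat_mult)
  also have "exp (complex_of_real (ln q)) = complex_of_real q"
    using \<open>0<q\<close> by (simp add: exp_of_real)
  finally show ?thesis .
qed

lemma qpow_1: "0 < q \<Longrightarrow> qpow q 1 = complex_of_real q"
  using qpow_nat[of q 1] by simp

lemma qpow_0: "qpow q 0 = 1" by (simp add: qpow_def)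

lemma qpow_nz: "qpow q s \<noteq> 0" by (simp add: qpow_def)

lemma qpow_minus: "qpow q (-s) = inverse (qpow q s)"
  by (simp add: qpow_def exp_minus)

lemma qpoch_0[simp]: "qpoch a q 0 = 1" by (simp add: qpoch_def)

lemma qpoch_Suc: "qpoch a q (Suc k) = qpoch a q k * (1 - a * complex_of_real q ^ k)"
  by (simp add: qpoch_def lessThan_Suc mult.commute)

lemma qpoch_Suc': "qpoch a q (Suc k) = (1 - a) * qpoch (a * complex_of_real q) q k"
  unfolding qpoch_def by (subst prod.lessThan_Suc_shift) (simp add: mult.assoc)

lemma qpoch_nz: "(\<And>j. j < k \<Longrightarrow> a * complex_of_real q ^ j \<noteq> 1) \<Longrightarrow> qpoch a q k \<noteq> 0"
  unfolding qpoch_def by (auto simp: prod_zero_iff)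

lemma qpoch_lim:
  assumes "0 < q" "q < 1"
  shows "(\<lambda>k. qpoch a q k) \<longlonglongrightarrow> qpoch_inf a q"
proof -
  let ?f = "\<lambda>j. 1 - a * complex_of_real q ^ j"
  have "summable (\<lambda>j. norm a * q ^ j)"
    using assms by (intro summable_mult summable_geometric) auto
  hence "summable (\<lambda>j. norm (?f j - 1))"
    using assms by (simp add: norm_mult norm_power)
  hence "abs_convergent_prod ?f" by (rule summable_imp_abs_convergent_prod)
  hence "convergent_prod ?f" by (rule abs_convergent_prod_imp_convergent_prod)
  hence "(\<lambda>n. \<Prod>i\<le>n. ?f i) \<longlonglongrightarrow> prodinf ?f" by (rule convergent_prod_LIMSEQ)
  hence "(\<lambda>n. qpoch a q (Suc n)) \<longlonglongrightarrow> prodinf ?f"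
    by (simp add: qpoch_def lessThan_Suc_atMost)
  hence L: "(\<lambda>k. qpoch a q k) \<longlonglongrightarrow> prodinf ?f" by (rule LIMSEQ_imp_Suc)
  hence "qpoch_inf a q = prodinf ?f" unfolding qpoch_inf_def by (rule limI)
  with L show ?thesis by simp
qed

lemma qpoch_inf_shift:
  assumes "0 < q" "q < 1"
  shows "qpoch_inf a q = (1 - a) * qpoch_inf (a * complex_of_real q) q"
proof -
  have "(\<lambda>k. qpoch a q (Suc k)) \<longlonglongrightarrow> (1 - a) * qpoch_inf (a * complex_of_real q) q"
    unfolding qpoch_Suc' by (intro tendsto_mult tendsto_const qpoch_lim assms)
  hence "(\<lambda>k. qpoch a q k) \<longlonglongrightarrow> (1 - a) * qpoch_inf (a * complex_of_real q) q"
    by (rule LIMSEQ_imp_Suc)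
  moreover have "(\<lambda>k. qpoch a q k) \<longlonglongrightarrow> qpoch_inf a q" by (rule qpoch_lim[OF assms])
  ultimately show ?thesis using LIMSEQ_unique by blast
qed



definition cf :: "real \<Rightarrow> complex \<Rightarrow> nat \<Rightarrow> complex" where
  "cf q b k = complex_of_real (q ^ (k * (k - 1))) / (qpoch (complex_of_real q) q k * qpoch b q k)"

lemma phi01_cf: "phi01 q b z = (\<Sum>k. cf q b k * z ^ k)"
  by (simp add: phi01_def cf_def)

definition good :: "real \<Rightarrow> complex \<Rightarrow> bool" where
  "good q b \<longleftrightarrow> (\<forall>j. b * complex_of_real q ^ j \<noteq> 1)"

lemma good_q: "0 < q \<Longrightarrow> q < 1 \<Longrightarrow> good q (complex_of_real q)"
proof -
  assume q: "0 < q" "q < 1"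
  { fix j :: nat
    have "q ^ j \<le> 1" using q by (intro power_le_one) auto
    hence "q * q ^ j \<le> q" using q by (intro mult_left_le) auto
    hence "q * q ^ j < 1" using q by linarith
    hence "complex_of_real q * complex_of_real q ^ j \<noteq> 1"
      by (metis of_real_1 of_real_eq_iff of_real_mult of_real_power less_irrefl) }
  thus ?thesis by (simp add: good_def)
qed

lemma pow_shift: "(q::real) ^ (Suc k * (Suc k - 1)) = q ^ (k * (k - 1)) * q ^ (2 * k)"
proof -
  have "Suc k * (Suc k - 1) = k * (k - 1) + 2 * k" by (cases k) (auto simp: algebra_simps)
  thus ?thesis by (metis power_add)
qed

lemma cf_Suc:
  assumes "0 < q" "q < 1" "good q b"
  shows "cf q b (Suc k) * ((1 - complex_of_real q * complex_of_real q ^ k) * (1 - b * complex_of_real q ^ k))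
         = cf q b k * complex_of_real q ^ (2 * k)"
proof -
  have g: "good q (complex_of_real q)" using good_q assms by simp
  have n1: "qpoch (complex_of_real q) q k \<noteq> 0" "qpoch b q k \<noteq> 0"
    using g assms(3) by (auto simp: good_def intro!: qpoch_nz)
  have n2: "1 - complex_of_real q * complex_of_real q ^ k \<noteq> 0" "1 - b * complex_of_real q ^ k \<noteq> 0"
    using g assms(3) unfolding good_def by (metis right_minus_eq)+
  have gen: "\<And>x y A B a1 b1::complex. A \<noteq> 0 \<Longrightarrow> B \<noteq> 0 \<Longrightarrow> a1 \<noteq> 0 \<Longrightarrow> b1 \<noteq> 0 \<Longrightarrow>
     x * y / (A * a1 * (B * b1)) * (a1 * b1) = x / (A * B) * y"
    by (simp add: field_simps)
  show ?thesis unfolding cf_def qpoch_Suc pow_shift of_real_mult of_real_power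
    by (rule gen[OF n1 n2])
qed



lemma cf_summable:
  assumes q: "0 < q" "q < 1" and g: "good q b"
  shows "summable (\<lambda>k. cf q b k * y ^ k)"
proof -
  define e where "e = min (1/(2*(norm b+1))) ((1-q)/(4*(norm y+1)))"
  have e1: "0 < 1/(2*(norm b+1))" by (simp add: add_nonneg_pos)
  have e2: "0 < (1-q)/(4*(norm y+1))" using q by (intro divide_pos_pos) (auto simp: add_nonneg_pos)
  have e: "e > 0" using e1 e2 by (simp add: e_def)
  obtain N where N: "q ^ N < e" using real_arch_pow_inv[OF e q(2)] by blast
  show ?thesis
  proof (rule summable_ratio_test[of "1/2" N])
    fix n assume "N \<le> n"
    hence qn: "q ^ n < e" using power_decreasing[of N n q] q N by linarith
    have qn0: "0 < q ^ n" using q by simp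
    have qn1: "q ^ n \<le> 1" using q by (intro power_le_one) auto
    define r1 where "r1 = norm (1 - complex_of_real q * complex_of_real q ^ n)"
    define r2 where "r2 = norm (1 - b * complex_of_real q ^ n)"
    have "1 - complex_of_real q * complex_of_real q ^ n = complex_of_real (1 - q * q ^ n)" by simp
    hence "r1 = \<bar>1 - q * q ^ n\<bar>" unfolding r1_def by (metis norm_of_real)
    moreover have "q * q ^ n \<le> q" using q qn1 by (intro mult_left_le) auto
    ultimately have r1: "r1 \<ge> 1 - q" using q by linarith
    have "norm (b * complex_of_real q ^ n) = norm b * q ^ n" using q by (simp add: norm_mult norm_power)
    moreover have "norm b * q ^ n \<le> 1/2"
    proof -
      have "q ^ n * (norm b + 1) < e * (norm b + 1)" using qn by (intro mult_strict_right_mono) (auto simp: add_nonneg_pos)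
      also have "e * (norm b + 1) \<le> 1/(2*(norm b+1)) * (norm b + 1)"
        unfolding e_def by (intro mult_right_mono) auto
      also have "1/(2*(norm b+1)) * (norm b + 1) = 1/2" using norm_ge_zero[of b] by (simp; linarith)
      finally have "q ^ n * norm b + q ^ n < 1/2" by (simp add: algebra_simps)
      thus ?thesis using qn0 by (simp add: algebra_simps)
    qed
    moreover have "r2 \<ge> 1 - norm (b * complex_of_real q ^ n)" unfolding r2_def
      using norm_triangle_ineq2[of 1 "b * complex_of_real q ^ n"] by simp
    ultimately have r2: "r2 \<ge> 1/2" by linarith
    have yb: "q ^ n * norm y \<le> (1 - q) / 4"
    proof -
      have "q ^ n * (norm y + 1) < e * (norm y + 1)" using qn by (intro mult_strict_right_mono) (auto simp: add_nonneg_pos)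
      also have "e * (norm y + 1) \<le> (1-q)/(4*(norm y+1)) * (norm y + 1)"
        unfolding e_def by (intro mult_right_mono) auto
      also have "(1-q)/(4*(norm y+1)) * (norm y + 1) = (1-q)/4" 
      proof -
        have "norm y + 1 \<noteq> 0" using norm_ge_zero[of y] by linarith
        then show ?thesis by (simp add: divide_simps)
      qed
      finally have "q ^ n * norm y + q ^ n < (1-q)/4" by (simp add: algebra_simps)
      thus ?thesis using qn0 by (simp add: algebra_simps)
    qed
    have q2: "q ^ (2*n) \<le> q ^ n" using q by (intro power_decreasing) auto
    have key: "q ^ (2*n) * norm y \<le> 1/2 * (r1 * r2)"
    proof -
      have "q ^ (2*n) * norm y \<le> q ^ n * norm y" using q2 by (intro mult_right_mono) auto
      also have "\<dots> \<le> (1-q)/4" by (rule yb)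
      also have "(1-q)/4 = 1/2 * ((1-q) * (1/2))" by simp
      also have "\<dots> \<le> 1/2 * (r1 * r2)" using r1 r2 q by (intro mult_left_mono mult_mono) auto
      finally show ?thesis .
    qed
    have eq: "norm (cf q b (Suc n)) * (r1 * r2) = norm (cf q b n) * q ^ (2*n)"
      using arg_cong[OF cf_Suc[OF q g, of n], of norm] q unfolding r1_def r2_def
      by (simp add: norm_mult norm_power)
    have rpos: "r1 * r2 > 0" using r1 r2 q by (intro mult_pos_pos) auto
    have "norm (cf q b (Suc n)) * norm y * (r1 * r2) \<le> 1/2 * norm (cf q b n) * (r1 * r2)"
    proof -
      have "norm (cf q b (Suc n)) * norm y * (r1 * r2) = norm (cf q b n) * (q ^ (2*n) * norm y)"
        using eq by (simp add: algebra_simps)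
      also have "\<dots> \<le> norm (cf q b n) * (1/2 * (r1 * r2))" using key by (intro mult_left_mono) auto
      finally show ?thesis by (simp add: algebra_simps)
    qed
    hence "norm (cf q b (Suc n)) * norm y \<le> 1/2 * norm (cf q b n)"
      by (rule mult_right_le_imp_le[OF _ rpos])
    hence "norm (cf q b (Suc n)) * norm y * norm y ^ n \<le> 1/2 * norm (cf q b n) * norm y ^ n"
      by (intro mult_right_mono) auto
    thus "norm (cf q b (Suc n) * y ^ Suc n) \<le> 1/2 * norm (cf q b n * y ^ n)"
      by (simp add: norm_mult norm_power algebra_simps)
  qed simp
qed



lemma good_nz:
  assumes "0 < q" "q < 1" "good q b"
  shows "qpoch (complex_of_real q) q k \<noteq> 0" "qpoch b q k \<noteq> 0" "1 - b \<noteq> 0"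
proof -
  have g: "good q (complex_of_real q)" using good_q assms by simp
  show "qpoch (complex_of_real q) q k \<noteq> 0" "qpoch b q k \<noteq> 0"
    using g assms(3) by (auto simp: good_def intro!: qpoch_nz)
  show "1 - b \<noteq> 0" using assms(3) unfolding good_def by (metis power_0 mult_1_right right_minus_eq)
qed

lemma E1:
  assumes q: "0 < q" "q < 1" and g: "good q b" and g': "good q (b * complex_of_real q)"
  shows "(1 - b) * phi01 q b y = phi01 q (b * complex_of_real q) y
            - b * phi01 q (b * complex_of_real q) (complex_of_real q * y)"
proof -
  let ?c = "complex_of_real q"
  have tm: "(1 - b) * (cf q b k * y ^ k) =
     cf q (b * ?c) k * y ^ k - b * (cf q (b * ?c) k * (?c * y) ^ k)" for k
  proof -
    have n: "qpoch ?c q k \<noteq> 0" "qpoch b q k \<noteq> 0" "qpoch (b * ?c) q k \<noteq> 0"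
      using good_nz[OF q g] good_nz[OF q g'] by auto
    have rel: "(1 - b) * qpoch (b * ?c) q k = qpoch b q k * (1 - b * ?c ^ k)"
      using qpoch_Suc[of b q k] qpoch_Suc'[of b q k] by simp
    have gen: "\<And>x Q B B' c1 c2 Y :: complex. Q \<noteq> 0 \<Longrightarrow> B \<noteq> 0 \<Longrightarrow> B' \<noteq> 0 \<Longrightarrow>
        c1 * B' = B * c2 \<Longrightarrow> c1 * (x / (Q * B) * Y) = x / (Q * B') * Y * c2"
    proof -
      fix x Q B B' c1 c2 Y :: complex
      assume h: "Q \<noteq> 0" "B \<noteq> 0" "B' \<noteq> 0" "c1 * B' = B * c2"
      hence "c1 = B * c2 / B'" by (simp add: eq_divide_eq)
      thus "c1 * (x / (Q * B) * Y) = x / (Q * B') * Y * c2" using h by (simp add: field_simps)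
    qed
    have "(1 - b) * (cf q b k * y ^ k) = cf q (b * ?c) k * y ^ k * (1 - b * ?c ^ k)"
      unfolding cf_def by (rule gen[OF n rel])
    thus ?thesis by (simp add: algebra_simps power_mult_distrib)
  qed
  have s1: "summable (\<lambda>k. cf q (b * ?c) k * y ^ k)" by (rule cf_summable[OF q g'])
  have s2: "summable (\<lambda>k. b * (cf q (b * ?c) k * (?c * y) ^ k))"
    by (intro summable_mult cf_summable[OF q g'])
  have "(1 - b) * phi01 q b y = (\<Sum>k. (1 - b) * (cf q b k * y ^ k))"
    unfolding phi01_cf by (rule suminf_mult[symmetric, OF cf_summable[OF q g]])
  also have "\<dots> = (\<Sum>k. cf q (b * ?c) k * y ^ k - b * (cf q (b * ?c) k * (?c * y) ^ k))"
    by (simp only: tm)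
  also have "\<dots> = phi01 q (b * ?c) y - b * phi01 q (b * ?c) (?c * y)"
    unfolding phi01_cf suminf_diff[OF s1 s2, symmetric]
    using suminf_mult[OF cf_summable[OF q g'], of b] by simp
  finally show ?thesis .
qed

lemma E2:
  assumes q: "0 < q" "q < 1" and g: "good q b" and g': "good q (b * complex_of_real q)"
  shows "phi01 q b y - phi01 q b (complex_of_real q * y)
          = y / (1 - b) * phi01 q (b * complex_of_real q) (complex_of_real q ^ 2 * y)"
proof -
  let ?c = "complex_of_real q"
  define u where "u k = cf q b k * y ^ k - cf q b k * (?c * y) ^ k" for k
  have tm: "u (Suc m) = y / (1 - b) * (cf q (b * ?c) m * (?c ^ 2 * y) ^ m)" for m
  proof -
    have n4: "1 - ?c * ?c ^ m \<noteq> 0" using good_q[OF q] unfolding good_def by (metis right_minus_eq)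
    note n = good_nz(1)[OF q g] good_nz(2)[OF q g'] good_nz(3)[OF q g] n4
    have gen: "\<And>x X Q B b1 C Y :: complex. Q \<noteq> 0 \<Longrightarrow> B \<noteq> 0 \<Longrightarrow> b1 \<noteq> 0 \<Longrightarrow> 1 - ?c * C \<noteq> 0 \<Longrightarrow>
        x * X / (Q * (1 - ?c * C) * (b1 * B)) * (y * Y) - x * X / (Q * (1 - ?c * C) * (b1 * B)) * ((?c * C) * (y * Y))
        = y / b1 * (x / (Q * B) * X * Y)"
    proof -
      fix x X Q B b1 C Y :: complex
      assume h: "Q \<noteq> 0" "B \<noteq> 0" "b1 \<noteq> 0" "1 - ?c * C \<noteq> 0"
      define d where "d = 1 - ?c * C"
      define A where "A = x * X / (Q * d * (b1 * B))"
      have d: "d \<noteq> 0" using h d_def by simp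
      have "A * (y * Y) - A * ((?c * C) * (y * Y)) = A * d * (y * Y)" by (simp add: d_def algebra_simps)
      also have "A * d = x * X / (Q * (b1 * B))" using d h by (simp add: A_def)
      finally have eq: "A * (y * Y) - A * ((?c * C) * (y * Y)) = x * X / (Q * (b1 * B)) * (y * Y)" .
      have r: "x * X / (Q * (b1 * B)) * (y * Y) = y / b1 * (x / (Q * B) * X * Y)" by (simp add: ac_simps)
      show "x * X / (Q * (1 - ?c * C) * (b1 * B)) * (y * Y) - x * X / (Q * (1 - ?c * C) * (b1 * B)) * ((?c * C) * (y * Y))
        = y / b1 * (x / (Q * B) * X * Y)" using trans[OF eq[unfolded A_def d_def] r] .
    qed
    have "u (Suc m) = complex_of_real (q ^ (m * (m - 1))) * ?c ^ (2 * m) /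
        (qpoch ?c q m * (1 - ?c * ?c ^ m) * ((1 - b) * qpoch (b * ?c) q m)) * (y * y ^ m)
      - complex_of_real (q ^ (m * (m - 1))) * ?c ^ (2 * m) /
        (qpoch ?c q m * (1 - ?c * ?c ^ m) * ((1 - b) * qpoch (b * ?c) q m)) * ((?c * ?c ^ m) * (y * y ^ m))"
      unfolding u_def cf_def qpoch_Suc[of ?c] qpoch_Suc'[of b]
      by (simp only: pow_shift of_real_mult of_real_power power_mult_distrib power_Suc) (simp add: mult_ac)
    also have "\<dots> = y / (1 - b) * (complex_of_real (q ^ (m * (m - 1))) / (qpoch ?c q m * qpoch (b * ?c) q m) * ?c ^ (2 * m) * y ^ m)"
      by (rule gen[OF n(1) n(2) n(3) n(4)])
    also have "\<dots> = y / (1 - b) * (cf q (b * ?c) m * (?c ^ 2 * y) ^ m)"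
      unfolding cf_def by (simp add: power_mult_distrib power_mult)
    finally show ?thesis .
  qed
  have su: "summable u" unfolding u_def
    by (intro summable_diff cf_summable[OF q g])
  have "phi01 q b y - phi01 q b (?c * y) = suminf u"
    unfolding phi01_cf u_def by (intro suminf_diff cf_summable[OF q g])
  also have "\<dots> = (\<Sum>m. u (Suc m))" using suminf_split_head[OF su] by (simp add: u_def)
  also have "\<dots> = (\<Sum>m. y / (1 - b) * (cf q (b * ?c) m * (?c ^ 2 * y) ^ m))" by (simp only: tm)
  also have "\<dots> = y / (1 - b) * phi01 q (b * ?c) (?c ^ 2 * y)"
    unfolding phi01_cf by (rule suminf_mult[OF cf_summable[OF q g']])
  finally show ?thesis .
qed



lemma phi_0: "phi01 q b 0 = 1"
  unfolding phi01_cf using powser_zero[of "cf q b"] by (simp add: cf_def)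

lemma phi_isCont:
  assumes q: "0 < q" "q < 1" and g: "good q b"
  shows "isCont (\<lambda>y. phi01 q b (e * y)) wz"
proof -
  have "isCont (\<lambda>y. \<Sum>k. cf q b k * y ^ k) (e * wz)"
    by (rule isCont_powser[OF cf_summable[OF q g, of "of_real (norm (e * wz) + 1)"]]) simp
  hence c: "isCont (\<lambda>y. phi01 q b y) (e * wz)" unfolding phi01_cf .
  show ?thesis by (rule isCont_o2[where f="\<lambda>y. e * y" and g="phi01 q b", OF _ c]) simp
qed

lemma phi_lim:
  assumes q: "0 < q" "q < 1" and g: "good q b"
  shows "(\<lambda>k. phi01 q b (e * (complex_of_real q ^ k * z))) \<longlonglongrightarrow> 1"
proof -
  have "(\<lambda>k. complex_of_real q ^ k * z) \<longlonglongrightarrow> 0 * z"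
    using q by (intro tendsto_intros) simp
  hence l: "(\<lambda>k. complex_of_real q ^ k * z) \<longlonglongrightarrow> 0" by simp
  have "(\<lambda>k. phi01 q b (e * (complex_of_real q ^ k * z))) \<longlonglongrightarrow> phi01 q b (e * 0)"
    by (rule isCont_tendsto_compose[OF phi_isCont[OF q g, where e=e and wz=0] l])
  thus ?thesis by (simp add: phi_0)
qed

lemma alg:
  fixes a c z p r Qv s :: complex
  assumes "a \<noteq> 0" "1 - a \<noteq> 0" "1 - a * c \<noteq> 0"
  shows "(p - a * c * z / (1 - a * c) * r) * (Qv - inverse a * z / (1 - inverse a) * s)
     - a * z / ((1 - a) * (1 - a * c)) * ((1 - a * c) * p + a * c * r) * ((1 - inverse a) * Qv + inverse a * s)
     = (1 + z) * (p * Qv - a * (c * z) / ((1 - a) * (1 - a * c)) * r * s)"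
proof -
  define d1 where "d1 = 1 - a"
  define d2 where "d2 = 1 - a * c"
  have d: "d1 \<noteq> 0" "d2 \<noteq> 0" using assms by (auto simp: d1_def d2_def)
  have i1: "inverse a * z / (1 - inverse a) = - z / d1" using assms unfolding d1_def
    by (simp add: field_simps)
  have i2: "1 - inverse a = - d1 / a" using assms unfolding d1_def by (simp add: field_simps)
  have i3: "inverse a * s = s / a" by (simp add: field_simps)
  have core: "(p - a * c * z / d2 * r) * (Qv - - z / d1 * s)
     - a * z / (d1 * d2) * (d2 * p + a * c * r) * (- d1 / a * Qv + s / a)
     = (1 + z) * (p * Qv - a * (c * z) / (d1 * d2) * r * s)"
    using d assms(1) by (simp add: field_simps)
  show ?thesis unfolding i1 unfolding i2 i3 using core unfolding d1_def d2_def .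
qed



lemma good_shift: "good q x \<Longrightarrow> good q (x * complex_of_real q)"
  unfolding good_def by (metis mult.assoc power_Suc)

lemma part2_gen:
  assumes q: "0 < q" "q < 1" and a0: "a \<noteq> 0"
    and ga: "good q a" and gi: "good q (inverse a)"
  shows "phi01 q (a * complex_of_real q) (- (a * complex_of_real q) * z)
          * phi01 q (inverse a) (- inverse a * z)
         - a * z / ((1 - a) * (1 - a * complex_of_real q))
          * phi01 q (a * complex_of_real q * complex_of_real q) (- (a * complex_of_real q * complex_of_real q) * z)
          * phi01 q (inverse a * complex_of_real q) (- (inverse a * complex_of_real q) * z)
         = qpoch_inf (- z) q"
proof -
  define c where "c = complex_of_real q"
  have g1: "good q (a * c)" "good q (a * c * c)" "good q (a * c * c * c)"
    "good q (inverse a * c)" "good q (inverse a * c * c)"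
    using good_shift ga gi unfolding c_def by blast+
  note g2 = g1[unfolded c_def]
  have n1: "1 - a \<noteq> 0" "1 - a * c \<noteq> 0" "1 - inverse a \<noteq> 0"
    using good_nz(3)[OF q ga] good_nz(3)[OF q g1(1)] good_nz(3)[OF q gi] by auto
  define P where "P z = phi01 q (a * c) (- (a * c) * z)" for z
  define Q where "Q z = phi01 q (inverse a) (- inverse a * z)" for z
  define R where "R z = phi01 q (a * c * c) (- (a * c * c) * z)" for z
  define S where "S z = phi01 q (inverse a * c) (- (inverse a * c) * z)" for z
  define H where "H z = P z * Q z - a * z / ((1 - a) * (1 - a * c)) * R z * S z" for z
  have fe: "H z = (1 + z) * H (c * z)" for z
  proof -
    have i: "P z = P (c * z) - a * c * z / (1 - a * c) * R (c * z)"
      using E2[OF q g2(1) g2(2), of "- (a * c) * z"] unfolding P_def R_def c_def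
      by (simp add: algebra_simps power2_eq_square)
    have ii: "Q z = Q (c * z) - inverse a * z / (1 - inverse a) * S (c * z)"
      using E2[OF q gi g2(4), of "- inverse a * z"] unfolding Q_def S_def c_def
      by (simp add: algebra_simps power2_eq_square)
    have iii: "R z = (1 - a * c) * P (c * z) + a * c * R (c * z)"
      using E1[OF q g2(1) g2(2), of "- (a * c) * (c * z)"] unfolding P_def R_def c_def
      by (simp add: algebra_simps)
    have iv: "S z = (1 - inverse a) * Q (c * z) + inverse a * S (c * z)"
      using E1[OF q gi g2(4), of "- inverse a * (c * z)"] unfolding Q_def S_def c_def
      by (simp add: algebra_simps)
    show ?thesis unfolding H_def i ii iii iv
      using alg[OF a0 n1(1) n1(2), where z=z and p="P (c*z)" and r="R (c*z)" and Qv="Q (c*z)" and s="S (c*z)"] .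
  qed
  have it: "H z = qpoch (- z) q k * H (c ^ k * z)" for k
  proof (induction k)
    case 0
    then show ?case by simp
  next
    case (Suc k)
    have "H z = qpoch (- z) q k * ((1 + c ^ k * z) * H (c * (c ^ k * z)))"
      using Suc fe[of "c ^ k * z"] by simp
    also have "\<dots> = qpoch (- z) q (Suc k) * H (c ^ Suc k * z)"
      unfolding qpoch_Suc c_def by (simp add: algebra_simps)
    finally show ?case .
  qed
  have l0: "(\<lambda>k. c ^ k * z) \<longlonglongrightarrow> 0"
  proof -
    have "(\<lambda>k. c ^ k * z) \<longlonglongrightarrow> 0 * z" using q unfolding c_def by (intro tendsto_intros) simp
    thus ?thesis by simp
  qed
  have lP: "(\<lambda>k. P (c ^ k * z)) \<longlonglongrightarrow> 1" unfolding P_def c_def by (rule phi_lim[OF q g2(1)])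
  have lQ: "(\<lambda>k. Q (c ^ k * z)) \<longlonglongrightarrow> 1" unfolding Q_def c_def by (rule phi_lim[OF q gi])
  have lR: "(\<lambda>k. R (c ^ k * z)) \<longlonglongrightarrow> 1" unfolding R_def c_def by (rule phi_lim[OF q g2(2)])
  have lS: "(\<lambda>k. S (c ^ k * z)) \<longlonglongrightarrow> 1" unfolding S_def c_def by (rule phi_lim[OF q g2(4)])
  have "(\<lambda>k. H (c ^ k * z)) \<longlonglongrightarrow> 1 * 1 - a * 0 / ((1 - a) * (1 - a * c)) * 1 * 1"
    unfolding H_def by (intro tendsto_intros lP lQ lR lS l0) (use n1 in simp)
  hence lH: "(\<lambda>k. H (c ^ k * z)) \<longlonglongrightarrow> 1" by simp
  have ev: "eventually (\<lambda>k. H (c ^ k * z) \<noteq> 0) sequentially"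
    by (rule tendsto_imp_eventually_ne[OF lH]) simp
  have ev2: "eventually (\<lambda>k. H z / H (c ^ k * z) = qpoch (- z) q k) sequentially"
    using ev
  proof eventually_elim
    case (elim k)
    show ?case using it[of k] elim by simp
  qed
  have "(\<lambda>k. H z / H (c ^ k * z)) \<longlonglongrightarrow> H z / 1"
    by (intro tendsto_intros lH) simp
  hence "(\<lambda>k. qpoch (- z) q k) \<longlonglongrightarrow> H z"
    using Lim_transform_eventually[OF _ ev2] by simp
  hence "qpoch_inf (- z) q = H z" using qpoch_lim[OF q, of "- z"] LIMSEQ_unique by blast
  thus ?thesis unfolding H_def P_def Q_def R_def S_def c_def by simp
qed



lemma alg2:
  fixes h h1 h2 h3 h4 s I0 I3 I4 a c w P Q R S E1 E2 E3 E4 :: complex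
  assumes "w \<noteq> 0" "a \<noteq> 0" "1 - a \<noteq> 0" "1 - a * c \<noteq> 0"
    and "h1 * h2 = h" "h3 * h4 = h * s" "E1 * E2 = inverse w" "E3 * E4 = w"
  shows "(h1 * ((1 - a * c) * I3) / I0 * E1 * P) * (h2 * ((1 - inverse a) * I4) / I0 * E2 * Q)
       + (h3 * I3 / I0 * E3 * R) * (h4 * I4 / I0 * E4 * S)
     = h * ((1 - a * c) * I3) * ((1 - inverse a) * I4)
       * (P * Q - a * (s * w ^ 2) / ((1 - a) * (1 - a * c)) * R * S) / (I0 ^ 2 * w)"
proof -
  have l: "(h1 * ((1 - a * c) * I3) / I0 * E1 * P) * (h2 * ((1 - inverse a) * I4) / I0 * E2 * Q)
       + (h3 * I3 / I0 * E3 * R) * (h4 * I4 / I0 * E4 * S)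
     = (h1 * h2) * (E1 * E2) * ((1 - a * c) * I3) * ((1 - inverse a) * I4) * P * Q / I0 ^ 2
       + (h3 * h4) * (E3 * E4) * I3 * I4 * R * S / I0 ^ 2"
    by (simp add: power2_eq_square mult_ac)
  also have "\<dots> = h * inverse w * ((1 - a * c) * I3) * ((1 - inverse a) * I4) * P * Q / I0 ^ 2
       + (h * s) * w * I3 * I4 * R * S / I0 ^ 2" by (simp only: assms(5-8))
  finally have l: "(h1 * ((1 - a * c) * I3) / I0 * E1 * P) * (h2 * ((1 - inverse a) * I4) / I0 * E2 * Q)
       + (h3 * I3 / I0 * E3 * R) * (h4 * I4 / I0 * E4 * S) = h * inverse w * ((1 - a * c) * I3) * ((1 - inverse a) * I4) * P * Q / I0 ^ 2
       + (h * s) * w * I3 * I4 * R * S / I0 ^ 2" .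
  show ?thesis
  proof (cases "I0 = 0")
    case True thus ?thesis unfolding l by simp
  next
    case False
    define d1 where "d1 = 1 - a"
    define d2 where "d2 = 1 - a * c"
    have d: "d1 \<noteq> 0" "d2 \<noteq> 0" using assms by (auto simp: d1_def d2_def)
    have ia: "1 - inverse a = - d1 / a" using assms unfolding d1_def by (simp add: field_simps)
    show ?thesis using False assms(1,2) d unfolding l unfolding ia d1_def[symmetric] d2_def[symmetric]
      by (simp add: field_simps power2_eq_square)
  qed
qed



theorem mainTheorem8:
  fixes q :: real and \<nu> :: complex
  assumes "0 < q" and "q < 1"
    and "\<forall>k::int. qpow q \<nu> \<noteq> qpow q (of_int k)"
  shows "(\<forall>w L. w \<noteq> 0 \<longrightarrow> exp L = w \<longrightarrow>
            qjfrak q \<nu> L (2*w) * qjfrak q (-\<nu>-1) L (2*w)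
            + qjfrak q (\<nu>+1) L (2*w) * qjfrak q (-\<nu>) L (2*w)
            = qpow q (\<nu> * (\<nu> + 1) / 2) * qpoch_inf (qpow q (\<nu> + 1)) q
              * qpoch_inf (qpow q (-\<nu>)) q * qpoch_inf (- qpow q (1/2) * w ^ 2) q
              / ((qpoch_inf (complex_of_real q) q) ^ 2 * w))
       \<and> (\<forall>z::complex.
            phi01 q (qpow q (\<nu>+1)) (- qpow q (\<nu>+1) * z) * phi01 q (qpow q (-\<nu>)) (- qpow q (-\<nu>) * z)
            - qpow q \<nu> * z / ((1 - qpow q \<nu>) * (1 - qpow q (\<nu>+1)))
              * phi01 q (qpow q (\<nu>+2)) (- qpow q (\<nu>+2) * z)
              * phi01 q (qpow q (-\<nu>+1)) (- qpow q (-\<nu>+1) * z)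
            = qpoch_inf (- z) q)"
proof -
  have q: "0 < q" "q < 1" using assms(1,2) .
  define a where "a = qpow q \<nu>"
  define c where "c = complex_of_real q"
  have a0: "a \<noteq> 0" unfolding a_def by (rule qpow_nz)
  have c0: "c \<noteq> 0" using q unfolding c_def by simp
  have ga: "good q a" unfolding good_def
  proof
    fix j :: nat
    show "a * complex_of_real q ^ j \<noteq> 1"
    proof
      assume h: "a * complex_of_real q ^ j = 1"
      have "qpow q (of_int (- int j)) = inverse (qpow q (of_nat j))"
        using qpow_minus[of q "of_nat j"] by simp
      also have "\<dots> = inverse (complex_of_real q ^ j)" using qpow_nat[OF q(1)] by simp
      also have "\<dots> = a" using inverse_unique[of "complex_of_real q ^ j" a] h by (simp add: mult.commute)
      finally show False using assms(3) unfolding a_def by metis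
    qed
  qed
  have gi: "good q (inverse a)" unfolding good_def
  proof
    fix j :: nat
    show "inverse a * complex_of_real q ^ j \<noteq> 1"
    proof
      assume h: "inverse a * complex_of_real q ^ j = 1"
      have "qpow q (of_int (int j)) = complex_of_real q ^ j"
        using qpow_nat[OF q(1)] by simp
      also have "\<dots> = a" using h a0 by (metis inverse_unique inverse_inverse_eq)
      finally show False using assms(3) unfolding a_def by metis
    qed
  qed
  have r1: "qpow q (\<nu> + 1) = a * c" unfolding a_def c_def qpow_add qpow_1[OF q(1)] ..
  have r2: "qpow q (\<nu> + 2) = a * c * c"
  proof -
    have "\<nu> + 2 = (\<nu> + 1) + 1" by simp
    thus ?thesis unfolding a_def c_def by (simp only: qpow_add qpow_1[OF q(1)])
  qed
  have r3: "qpow q (- \<nu>) = inverse a" unfolding a_def by (rule qpow_minus)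
  have r4: "qpow q (- \<nu> + 1) = inverse a * c" unfolding qpow_add r3 c_def qpow_1[OF q(1)] ..
  have P2: "phi01 q (a * c) (- (a * c) * z) * phi01 q (inverse a) (- inverse a * z)
         - a * z / ((1 - a) * (1 - a * c))
          * phi01 q (a * c * c) (- (a * c * c) * z)
          * phi01 q (inverse a * c) (- (inverse a * c) * z)
         = qpoch_inf (- z) q" for z
    unfolding c_def by (rule part2_gen[OF q a0 ga gi])
  show ?thesis
  proof
    show "\<forall>z::complex.
            phi01 q (qpow q (\<nu>+1)) (- qpow q (\<nu>+1) * z) * phi01 q (qpow q (-\<nu>)) (- qpow q (-\<nu>) * z)
            - qpow q \<nu> * z / ((1 - qpow q \<nu>) * (1 - qpow q (\<nu>+1)))
              * phi01 q (qpow q (\<nu>+2)) (- qpow q (\<nu>+2) * z)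
              * phi01 q (qpow q (-\<nu>+1)) (- qpow q (-\<nu>+1) * z)
            = qpoch_inf (- z) q"
      unfolding r1 r2 r3 r4 a_def[symmetric] using P2 by blast
  next
    show "\<forall>w L. w \<noteq> 0 \<longrightarrow> exp L = w \<longrightarrow>
            qjfrak q \<nu> L (2*w) * qjfrak q (-\<nu>-1) L (2*w)
            + qjfrak q (\<nu>+1) L (2*w) * qjfrak q (-\<nu>) L (2*w)
            = qpow q (\<nu> * (\<nu> + 1) / 2) * qpoch_inf (qpow q (\<nu> + 1)) q
              * qpoch_inf (qpow q (-\<nu>)) q * qpoch_inf (- qpow q (1/2) * w ^ 2) q
              / ((qpoch_inf (complex_of_real q) q) ^ 2 * w)"
    proof (intro allI impI)
      fix w L :: complex
      assume w0: "w \<noteq> 0" and eL: "exp L = w"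
      define s where "s = qpow q (1/2)"
      define z where "z = s * w ^ 2"
      define I0 where "I0 = qpoch_inf (complex_of_real q) q"
      define I3 where "I3 = qpoch_inf (a * c * c) q"
      define I4 where "I4 = qpoch_inf (inverse a * c) q"
      have I1: "qpoch_inf (qpow q (\<nu> + 1)) q = (1 - a * c) * I3"
        unfolding r1 I3_def c_def by (rule qpoch_inf_shift[OF q])
      have I2: "qpoch_inf (qpow q (- \<nu>)) q = (1 - inverse a) * I4"
        unfolding r3 I4_def c_def by (rule qpoch_inf_shift[OF q])
      have I1': "qpoch_inf (qpow q (\<nu> + 1 + 1)) q = I3"
        using r2 unfolding I3_def by (simp add: add.assoc)
      have I2': "qpoch_inf (qpow q (- \<nu> + 1)) q = I4"
        unfolding r4 I4_def ..
      have I1a: "qpoch_inf (a * c) q = (1 - a * c) * I3" using I1 unfolding r1 .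
      have I2a: "qpoch_inf (inverse a) q = (1 - inverse a) * I4" using I2 unfolding r3 .
      have 4: "(2 * w) ^ 2 / 4 = w ^ 2" by (simp add: power_mult_distrib)
      have j1: "qjfrak q \<nu> L (2*w) = qpow q (\<nu> * (\<nu> + 1) / 4) * ((1 - a * c) * I3) / I0 * exp (\<nu> * L)
            * phi01 q (a * c) (- (a * c) * z)"
      proof -
        have ee: "\<nu> + 3/2 = (\<nu> + 1) + 1/2" by simp
        have "qpow q (\<nu> + 3/2) = a * c * s"
          by (subst ee) (simp only: qpow_add[of q "\<nu> + 1"] r1 s_def)
        hence arg: "- qpow q (\<nu> + 3/2) * (2 * w) ^ 2 / 4 = - (a * c) * z"
          unfolding z_def using 4 by (simp add: algebra_simps)
        show ?thesis unfolding qjfrak_def arg r1 I0_def[symmetric] I1a by simp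
      qed
      have j2: "qjfrak q (-\<nu>-1) L (2*w) = qpow q ((-\<nu>-1) * ((-\<nu>-1) + 1) / 4) * ((1 - inverse a) * I4) / I0
            * exp ((-\<nu>-1) * L) * phi01 q (inverse a) (- inverse a * z)"
      proof -
        have e: "-\<nu>-1+1 = -\<nu>" by simp
        have ee: "-\<nu>-1 + 3/2 = (-\<nu>) + 1/2" by simp
        have "qpow q (-\<nu>-1 + 3/2) = inverse a * s"
          by (subst ee) (simp only: qpow_add[of q "-\<nu>"] r3 s_def)
        hence arg: "- qpow q (-\<nu>-1 + 3/2) * (2 * w) ^ 2 / 4 = - inverse a * z"
          unfolding z_def using 4 by (simp add: algebra_simps)
        show ?thesis unfolding qjfrak_def arg e r3 I0_def[symmetric] I2a by simp
      qed
      have j3: "qjfrak q (\<nu>+1) L (2*w) = qpow q ((\<nu>+1) * ((\<nu>+1) + 1) / 4) * I3 / I0 * exp ((\<nu>+1) * L)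
            * phi01 q (a * c * c) (- (a * c * c) * z)"
      proof -
        have e: "qpow q (\<nu> + 1 + 1) = a * c * c" using r2 by (simp add: add.assoc)
        have ee: "\<nu> + 1 + 3/2 = (\<nu> + 1 + 1) + 1/2" by simp
        have "qpow q (\<nu> + 1 + 3/2) = a * c * c * s"
          by (subst ee) (simp only: qpow_add[of q "\<nu> + 1 + 1"] e s_def)
        hence arg: "- qpow q (\<nu> + 1 + 3/2) * (2 * w) ^ 2 / 4 = - (a * c * c) * z"
          unfolding z_def using 4 by (simp add: algebra_simps)
        show ?thesis unfolding qjfrak_def arg e I0_def[symmetric] I3_def[symmetric] by simp
      qed
      have j4: "qjfrak q (-\<nu>) L (2*w) = qpow q ((-\<nu>) * ((-\<nu>) + 1) / 4) * I4 / I0 * exp ((-\<nu>) * L)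
            * phi01 q (inverse a * c) (- (inverse a * c) * z)"
      proof -
        have ee: "-\<nu> + 3/2 = (-\<nu> + 1) + 1/2" by simp
        have "qpow q (-\<nu> + 3/2) = inverse a * c * s"
          by (subst ee) (simp only: qpow_add[of q "-\<nu> + 1"] r4 s_def)
        hence arg: "- qpow q (-\<nu> + 3/2) * (2 * w) ^ 2 / 4 = - (inverse a * c) * z"
          unfolding z_def using 4 by (simp add: algebra_simps)
        show ?thesis unfolding qjfrak_def arg r4 I0_def[symmetric] I4_def[symmetric] by simp
      qed
      have h12: "qpow q (\<nu> * (\<nu> + 1) / 4) * qpow q ((-\<nu>-1) * ((-\<nu>-1) + 1) / 4) = qpow q (\<nu> * (\<nu> + 1) / 2)"
      proof -
        have "\<nu> * (\<nu> + 1) / 4 + (-\<nu>-1) * ((-\<nu>-1) + 1) / 4 = \<nu> * (\<nu> + 1) / 2"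
          by (simp add: field_simps)
        thus ?thesis by (simp only: qpow_add[symmetric])
      qed
      have h34: "qpow q ((\<nu>+1) * ((\<nu>+1) + 1) / 4) * qpow q ((-\<nu>) * ((-\<nu>) + 1) / 4) = qpow q (\<nu> * (\<nu> + 1) / 2) * s"
      proof -
        have "(\<nu>+1) * ((\<nu>+1) + 1) / 4 + (-\<nu>) * ((-\<nu>) + 1) / 4 = \<nu> * (\<nu> + 1) / 2 + 1/2"
          by (simp add: field_simps)
        thus ?thesis unfolding s_def by (simp only: qpow_add[symmetric])
      qed
      have E12: "exp (\<nu> * L) * exp ((-\<nu>-1) * L) = inverse w"
        unfolding exp_add[symmetric] eL[symmetric] by (simp add: algebra_simps exp_minus)
      have E34: "exp ((\<nu>+1) * L) * exp ((-\<nu>) * L) = w"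
        unfolding exp_add[symmetric] eL[symmetric] by (simp add: algebra_simps)
      have n1: "1 - a \<noteq> 0" "1 - a * c \<noteq> 0"
        using good_nz(3)[OF q ga] good_nz(3)[OF q good_shift[OF ga]] unfolding c_def by auto
      have Z: "qpoch_inf (- qpow q (1/2) * w ^ 2) q = phi01 q (a * c) (- (a * c) * z) * phi01 q (inverse a) (- inverse a * z)
         - a * (s * w ^ 2) / ((1 - a) * (1 - a * c))
          * phi01 q (a * c * c) (- (a * c * c) * z)
          * phi01 q (inverse a * c) (- (inverse a * c) * z)"
        using P2[of z] unfolding z_def s_def by simp
      show "qjfrak q \<nu> L (2*w) * qjfrak q (-\<nu>-1) L (2*w)
            + qjfrak q (\<nu>+1) L (2*w) * qjfrak q (-\<nu>) L (2*w)
            = qpow q (\<nu> * (\<nu> + 1) / 2) * qpoch_inf (qpow q (\<nu> + 1)) q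
              * qpoch_inf (qpow q (-\<nu>)) q * qpoch_inf (- qpow q (1/2) * w ^ 2) q
              / ((qpoch_inf (complex_of_real q) q) ^ 2 * w)"
        unfolding j1 j2 j3 j4 I1 I2 Z I0_def[symmetric]
        by (rule alg2[OF w0 a0 n1 h12 h34 E12 E34])
    qed
  qed
qed


end
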